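(* For every $r\ge3$ and every pair $\{P,Q\}$ of $r$-patterns forming a mismatch, there exists $1\le j\le r$ such that $\{P^{-j},Q^{-j}\}$ is also a mismatch.
   Context: An $r$-pattern is an ordered $r$-matching of size 2, written as a word over $\{A,B\}$ in which each letter appears $r$ times and which begins with $A$. For an $r$-pattern $P$ and $1\le j\le r$, $P^{-j}$ is the $(r-1)$-pattern obtained from $P$ by deleting the $j$-th occurrence of $A$ and the $j$-th occurrence of $B$ (e.g., for $P=AABBBABA$, $P^{-1}=P^{-2}=ABBABA$ and $P^{-3}=AABBBA$). An $r$-pattern $P$ is collectable if it can be split into consecutive blocks $P=S_1\cdots S_s$ each of the form $A^tB^t$ or $B^tA^t$ ($t\ge1$); this splitting is unique and $\lambda_P=(|S_1|/2,\dots,|S_s|/2)$ is the composition of $P$. A pair $\{P,Q\}$ of $r$-patterns is a mismatch if exactly one of $P,Q$ is collectable, or both are collectable and $\lambda_P\neq\lambda_Q$. *)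

theory Defs
  imports Main
begin

datatype letter = A | B

fun other :: "letter \<Rightarrow> letter" where
  "other A = B" | "other B = A"

definition is_pattern :: "nat \<Rightarrow> letter list \<Rightarrow> bool" where
  "is_pattern r P \<longleftrightarrow> P \<noteq> [] \<and> hd P = A \<and>
     count_list P A = r \<and> count_list P B = r"

text \<open>Delete the j-th occurrence (1-indexed) of letter x; no change if there is none.\<close>
fun del_occ :: "letter \<Rightarrow> nat \<Rightarrow> letter list \<Rightarrow> letter list" where
  "del_occ x j [] = []"
| "del_occ x j (y # ys) =
     (if y = x then (if j = 1 then ys else y # del_occ x (j - 1) ys)
      else y # del_occ x j ys)"

text \<open>P^{-j}: delete the j-th A and the j-th B.\<close>
definition del_pair :: "nat \<Rightarrow> letter list \<Rightarrow> letter list" where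
  "del_pair j P = del_occ B j (del_occ A j P)"

definition block :: "letter \<times> nat \<Rightarrow> letter list" where
  "block xt = replicate (snd xt) (fst xt) @ replicate (snd xt) (other (fst xt))"

definition splitting :: "letter list \<Rightarrow> (letter \<times> nat) list \<Rightarrow> bool" where
  "splitting P d \<longleftrightarrow> (\<forall>b\<in>set d. snd b \<ge> 1) \<and> concat (map block d) = P"

definition collectable :: "letter list \<Rightarrow> bool" where
  "collectable P \<longleftrightarrow> (\<exists>d. splitting P d)"

text \<open>The composition lambda_P = (|S_1|/2, ..., |S_s|/2) of a collectable pattern
  (the splitting is unique).\<close>
definition composition :: "letter list \<Rightarrow> nat list" where
  "composition P = (THE c. \<exists>d. splitting P d \<and> map snd d = c)"

definition mismatch :: "letter list \<Rightarrow> letter list \<Rightarrow> bool" where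
  "mismatch P Q \<longleftrightarrow>
     (collectable P \<and> \<not> collectable Q) \<or> (\<not> collectable P \<and> collectable Q) \<or>
     (collectable P \<and> collectable Q \<and> composition P \<noteq> composition Q)"

end

theory Submission
  imports Defs
begin


lemma other_other[simp]: "other (other x) = x" by (cases x) auto
lemma other_neq[simp]: "other x \<noteq> x" "x \<noteq> other x" by (cases x; simp)+
lemma neq_other: "z \<noteq> x \<Longrightarrow> z = other x" by (cases x; cases z) auto

lemma count_rep[simp]: "count_list (replicate n x) y = (if x = y then n else 0)"
  by (induction n) auto

lemma del_occ_0[simp]: "del_occ x 0 w = w"
  by (induction w) auto

lemma del_occ_append:
  "del_occ x j (u @ w) = (if j \<le> count_list u x then del_occ x j u @ w
     else u @ del_occ x (j - count_list u x) w)"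
  by (induction u arbitrary: j) auto

lemma count_del_occ:
  "count_list (del_occ x j w) y = count_list w y -
     (if y = x \<and> 1 \<le> j \<and> j \<le> count_list w x then 1 else 0)"
  by (induction w arbitrary: j) auto

lemma del_occ_comm: "x \<noteq> y \<Longrightarrow> del_occ x i (del_occ y k w) = del_occ y k (del_occ x i w)"
  by (induction w arbitrary: i k) auto

definition dp where "dp x j w = del_occ x j (del_occ (other x) j w)"

lemma del_pair_dp: "del_pair j w = dp x j w"
  by (cases x) (auto simp: dp_def del_pair_def del_occ_comm)

definition sh :: "letter \<Rightarrow> letter list \<Rightarrow> int" where
  "sh x w = int (count_list w (other x)) - int (count_list w x)"

definition bad :: "letter list \<Rightarrow> bool" where
  "bad w \<longleftrightarrow> (\<exists>u v x. w = u @ [x, other x] @ v \<and> sh x (u @ [x]) > 0)"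

lemma count_block[simp]: "count_list (block b) y = snd b"
  by (cases b; cases "fst b"; cases y) (auto simp: block_def)

lemma count_concat_blocks: "count_list (concat (map block d)) y = sum_list (map snd d)"
  by (induction d) auto

lemma sh_block[simp]: "sh x (block b @ w) = sh x w"
  by (simp add: sh_def)

lemma block_nth: "i < 2 * t \<Longrightarrow> block (x, t) ! i = (if i < t then x else other x)"
  by (auto simp: block_def nth_append)

lemma length_block[simp]: "length (block (x,t)) = 2 * t"
  by (simp add: block_def)

lemma block_prefix_eq:
  assumes "1 \<le> t" "1 \<le> s" "block (x,t) @ u = block (y,s) @ v"
  shows "x = y \<and> t = s"
proof -
  have h: "\<And>i. i < 2*t \<Longrightarrow> i < 2*s \<Longrightarrow> block (x,t) ! i = block (y,s) ! i"
    using assms(3) by (metis length_block nth_append)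
  have "x = y" using h[of 0] assms(1,2) by (simp add: block_nth)
  moreover have "t = s"
  proof (rule ccontr)
    assume "t \<noteq> s"
    then consider "t < s" | "s < t" by linarith
    then show False
    proof cases
      case 1 then show False using h[of t] \<open>x = y\<close> assms(1,2) by (simp add: block_nth)
    next
      case 2 then show False using h[of s] \<open>x = y\<close> assms(1,2) by (simp add: block_nth)
    qed
  qed
  ultimately show ?thesis by simp
qed

lemma splitting_unique: "splitting w d \<Longrightarrow> splitting w e \<Longrightarrow> d = e"
proof (induction d arbitrary: w e)
  case Nil
  then show ?case by (cases e) (auto simp: splitting_def block_def)
next
  case (Cons b d)
  obtain x t where b: "b = (x,t)" by (cases b)
  have t: "t \<ge> 1" using Cons.prems b by (auto simp: splitting_def)
  show ?case
  proof (cases e)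
    case Nil
    then show ?thesis using Cons.prems t b by (auto simp: splitting_def block_def)
  next
    case (Cons c e')
    obtain y s where c: "c = (y,s)" by (cases c)
    have s: "s \<ge> 1" using Cons.prems Cons c by (auto simp: splitting_def)
    have eq: "block (x,t) @ concat (map block d) = block (y,s) @ concat (map block e')"
      using Cons.prems Cons b c by (auto simp: splitting_def)
    from block_prefix_eq[OF t s eq] have "x = y" "t = s" by auto
    with eq have "concat (map block d) = concat (map block e')" by simp
    then have "d = e'" using Cons.IH[of "concat (map block d)" e'] Cons.prems Cons
      by (auto simp: splitting_def)
    then show ?thesis using Cons b c \<open>x = y\<close> \<open>t = s\<close> by simp
  qed
qed

lemma composition_eq: "splitting w d \<Longrightarrow> composition w = map snd d"
  unfolding composition_def
  by (rule the_equality) (auto dest: splitting_unique)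



fun decd :: "(letter \<times> nat) list \<Rightarrow> nat \<Rightarrow> (letter \<times> nat) list" where
  "decd [] j = []"
| "decd (b # d) j = (if j \<le> snd b then (if snd b = 1 then d else (fst b, snd b - 1) # d)
     else b # decd d (j - snd b))"

fun decc :: "nat list \<Rightarrow> nat \<Rightarrow> nat list" where
  "decc [] j = []"
| "decc (b # d) j = (if j \<le> b then (if b = 1 then d else (b - 1) # d)
     else b # decc d (j - b))"

lemma map_snd_decd: "map snd (decd d j) = decc (map snd d) j"
  by (induction d arbitrary: j) auto

lemma decd_pos: "\<forall>b\<in>set d. snd b \<ge> 1 \<Longrightarrow> \<forall>b\<in>set (decd d j). snd b \<ge> 1"
  by (induction d arbitrary: j) auto

lemma del_occ_rep_other: "y \<noteq> x \<Longrightarrow> del_occ y j (replicate t x) = replicate t x"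
  by (induction t arbitrary: j) auto

lemma del_occ_rep_same: "1 \<le> j \<Longrightarrow> j \<le> t \<Longrightarrow> del_occ x j (replicate t x) = replicate (t-1) x"
proof (induction t arbitrary: j)
  case 0 then show ?case by simp
next
  case (Suc t)
  show ?case
  proof (cases "j = 1")
    case True then show ?thesis by simp
  next
    case False
    then have "del_occ x j (replicate (Suc t) x) = x # del_occ x (j-1) (replicate t x)" by simp
    also have "\<dots> = x # replicate (t-1) x" using Suc.prems False Suc.IH[of "j-1"] by simp
    also have "\<dots> = replicate (Suc t - 1) x"
    proof -
      have "t \<ge> 1" using Suc.prems False by simp
      then show ?thesis by (cases t) auto
    qed
    finally show ?thesis .
  qed
qed

lemma del_pair_append:
  assumes "count_list u A = c" "count_list u B = c"
  shows "del_pair j (u @ w) = (if j \<le> c then del_pair j u @ w else u @ del_pair (j - c) w)"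
  using assms by (auto simp: del_pair_def del_occ_append count_del_occ)

lemma del_pair_block: "1 \<le> j \<Longrightarrow> j \<le> t \<Longrightarrow> del_pair j (block (x,t)) = block (x, t-1)"
  by (simp add: del_pair_dp[of _ _ x] dp_def block_def del_occ_append del_occ_rep_same del_occ_rep_other)

lemma del_pair_concat:
  "1 \<le> j \<Longrightarrow> \<forall>b\<in>set d. snd b \<ge> 1 \<Longrightarrow>
   del_pair j (concat (map block d)) = concat (map block (decd d j))"
proof (induction d arbitrary: j)
  case Nil
  then show ?case by (simp add: del_pair_def)
next
  case (Cons b d)
  obtain x t where b: "b = (x,t)" by (cases b)
  have "del_pair j (block (x,t) @ concat (map block d)) =
        (if j \<le> t then del_pair j (block (x,t)) @ concat (map block d)
         else block (x,t) @ del_pair (j - t) (concat (map block d)))"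
    by (rule del_pair_append) auto
  note eq = this
  have t1: "t \<ge> 1" using Cons.prems b by auto
  show ?case
  proof (cases "j \<le> t")
    case True
    then have "del_pair j (block (x,t)) = block (x, t-1)" using Cons.prems by (simp add: del_pair_block)
    moreover have "t = 1 \<Longrightarrow> block (x, t-1) = []" by (simp add: block_def)
    ultimately show ?thesis using eq True b by auto
  next
    case False
    then have "del_pair (j - t) (concat (map block d)) = concat (map block (decd d (j - t)))"
      using Cons.IH Cons.prems by auto
    then show ?thesis using eq False b by simp
  qed
qed

lemma splitting_del_pair:
  "splitting w d \<Longrightarrow> 1 \<le> j \<Longrightarrow> splitting (del_pair j w) (decd d j)"
  unfolding splitting_def using decd_pos del_pair_concat by metis

lemma sum_composition: "splitting w d \<Longrightarrow> sum_list (map snd d) = count_list w y"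
  unfolding splitting_def using count_concat_blocks by metis



lemma decc_distinguish:
  assumes "\<forall>a\<in>set l. a \<ge> 1" "\<forall>a\<in>set m. a \<ge> 1" "sum_list l = r" "sum_list m = r" "r \<ge> 3" "l \<noteq> m"
  shows "decc l 1 \<noteq> decc m 1 \<or> decc l r \<noteq> decc m r"
proof (rule ccontr)
  assume H: "\<not> ?thesis"
  obtain a l' where l: "l = a # l'" using assms by (cases l) auto
  obtain b m' where m: "m = b # m'" using assms by (cases m) auto
  have d1: "decc l 1 = decc m 1" "decc l r = decc m r" using H by auto
  have ab: "a \<ge> 1" "b \<ge> 1" using assms l m by auto
  show False
  proof (cases "a = 1")
    case True
    show False
    proof (cases "b = 1")
      case True
      then show False using d1 l m \<open>a = 1\<close> assms(6) by simp
    next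
      case False
      then have l': "l' = (b - 1) # m'" using d1 l m \<open>a = 1\<close> ab by simp
      show False
      proof (cases "m' = []")
        case True
        then show False using d1 l m l' \<open>a = 1\<close> assms(3-5) by auto
      next
        case False
        then have "sum_list m' \<ge> 1" using assms(2) m
          by (cases m') auto
        then show False using d1 l m l' \<open>a = 1\<close> assms(3-5) \<open>b \<noteq> 1\<close> by auto
      qed
    qed
  next
    case False
    show False
    proof (cases "b = 1")
      case False
      then show False using d1 l m \<open>a \<noteq> 1\<close> assms(6) ab by auto
    next
      case True
      then have m'': "m' = (a - 1) # l'" using d1 l m \<open>a \<noteq> 1\<close> ab by simp
      show False
      proof (cases "l' = []")
        case True
        then show False using d1 l m m'' \<open>b = 1\<close> assms(3-5) by auto
      next
        case False
        then have "sum_list l' \<ge> 1" using assms(1) l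
          by (cases l') auto
        then show False using d1 l m m'' \<open>b = 1\<close> assms(3-5) \<open>a \<noteq> 1\<close> by auto
      qed
    qed
  qed
qed



lemma sh_block0[simp]: "sh x (block b) = 0"
  by (simp add: sh_def)

lemma good_split: "splitting w d \<Longrightarrow> w = u @ [x, other x] @ v \<Longrightarrow> sh x (u @ [x]) \<le> 0"
proof (induction d arbitrary: w u)
  case Nil
  then show ?case by (simp add: splitting_def)
next
  case (Cons b d)
  obtain y t where b: "b = (y,t)" by (cases b)
  define w' where "w' = concat (map block d)"
  have t1: "t \<ge> 1" and w: "w = block (y,t) @ w'" and sw': "splitting w' d"
    using Cons.prems b by (auto simp: splitting_def w'_def)
  have eq: "block (y,t) @ w' = u @ [x, other x] @ v" using w Cons.prems by simp
  define L where "L = length u"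
  consider "2*t \<le> L" | "L + 1 = 2*t" | "L + 2 \<le> 2*t" by linarith
  then show ?case
  proof cases
    case 1
    have "take (2*t) (block (y,t) @ w') = take (2*t) (u @ [x, other x] @ v)" using eq by simp
    then have u1: "block (y,t) = take (2*t) u" using 1 by (simp add: L_def)
    have "drop (2*t) (block (y,t) @ w') = drop (2*t) (u @ [x, other x] @ v)" using eq by simp
    then have u2: "w' = drop (2*t) u @ [x, other x] @ v" using 1 by (simp add: L_def)
    have "u = block (y,t) @ drop (2*t) u" using u1 by simp
    then have "sh x (u @ [x]) = sh x (drop (2*t) u @ [x])"
      by (metis append_assoc sh_block)
    also have "\<dots> \<le> 0" using Cons.IH[OF sw' u2] .
    finally show ?thesis .
  next
    case 2
    have "take (2*t) (block (y,t) @ w') = take (2*t) (u @ [x, other x] @ v)" using eq by simp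
    moreover have "2 * t - length u = Suc 0" using 2 by (simp add: L_def)
    ultimately have "block (y,t) = u @ [x]" by simp
    then have "sh x (u @ [x]) = sh x (block (y,t))" by simp
    then show ?thesis by simp
  next
    case 3
    have n1: "(block (y,t) @ w') ! L = x" using eq by (simp add: L_def nth_append)
    have n2: "(block (y,t) @ w') ! (L+1) = other x" using eq by (simp add: L_def nth_append)
    have n1': "(if L < t then y else other y) = x" using n1 3 by (simp add: nth_append block_nth)
    have n2': "(if L + 1 < t then y else other y) = other x" using n2 3 by (simp add: nth_append block_nth)
    have Lt: "L < t" and xy: "x = y"
      using n1' n2' by (auto split: if_splits)
    have "take L (block (y,t) @ w') = take L (u @ [x, other x] @ v)" using eq by simp
    then have "u = replicate L y" using Lt by (simp add: L_def block_def)
    then show ?thesis using xy by (simp add: sh_def)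
  qed
qed

lemma run: "\<exists>k s. w = replicate k y @ s \<and> (s = [] \<or> hd s \<noteq> y)"
proof (induction w)
  case Nil then show ?case by auto
next
  case (Cons z w)
  then obtain k s where "w = replicate k y @ s" "s = [] \<or> hd s \<noteq> y" by blast
  then show ?case
  proof (cases "z = y")
    case True
    then show ?thesis using \<open>w = replicate k y @ s\<close> \<open>s = [] \<or> hd s \<noteq> y\<close>
      by (intro exI[of _ "Suc k"] exI[of _ s]) auto
  next
    case False
    then show ?thesis by (intro exI[of _ 0] exI[of _ "z # w"]) auto
  qed
qed

lemma bal_other: "count_list w A = count_list w B \<Longrightarrow> count_list w x = count_list w (other x)"
  by (cases x) auto

lemma not_bad_collectable:
  "count_list w A = count_list w B \<Longrightarrow> \<not> bad w \<Longrightarrow> \<exists>d. splitting w d"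
proof (induction "length w" arbitrary: w rule: less_induct)
  case less
  show ?case
  proof (cases w)
    case Nil
    then show ?thesis by (intro exI[of _ "[]"]) (simp add: splitting_def)
  next
    case (Cons x w0)
    obtain k s where w0: "w0 = replicate k x @ s" and s: "s = [] \<or> hd s \<noteq> x" using run[of w0 x] by blast
    obtain k2 s2 where s2: "s = replicate k2 (other x) @ s2" and s2h: "s2 = [] \<or> hd s2 \<noteq> other x"
      using run[of s "other x"] by blast
    define t where "t = Suc k"
    have w: "w = replicate t x @ replicate k2 (other x) @ s2" using Cons w0 s2 t_def by simp
    have bal: "count_list w x = count_list w (other x)" using bal_other less.prems(1) by blast
    have kt: "t \<le> k2"
    proof (rule ccontr)
      assume kt: "\<not> t \<le> k2"
      show False
      proof (cases "s2 = []")
        case True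
        then show False using bal w kt by simp
      next
        case False
        then have "hd s2 = x" using s2h neq_other by fastforce
        then obtain s3 where s3: "s2 = x # s3" using False by (cases s2) auto
        have "k2 \<noteq> 0"
        proof
          assume "k2 = 0"
          then show False using s s2 s3 by simp
        qed
        then have "w = (replicate t x @ replicate (k2 - 1) (other x)) @ [other x, other (other x)] @ s3"
          using w s3 by (cases k2) (auto simp: replicate_append_same[symmetric])
        moreover have "sh (other x) ((replicate t x @ replicate (k2 - 1) (other x)) @ [other x]) > 0"
          using kt \<open>k2 \<noteq> 0\<close> by (simp add: sh_def)
        ultimately have "bad w" unfolding bad_def by blast
        then show False using less.prems(2) by simp
      qed
    qed
    define rest where "rest = replicate (k2 - t) (other x) @ s2"
    have wr: "w = block (x,t) @ rest"
      using w kt by (simp add: block_def rest_def replicate_add[symmetric])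
    have t1: "t \<ge> 1" using t_def by simp
    have "count_list rest A = count_list rest B" using less.prems(1) wr by simp
    moreover have "\<not> bad rest"
    proof
      assume "bad rest"
      then obtain u v z where "rest = u @ [z, other z] @ v" "sh z (u @ [z]) > 0"
        unfolding bad_def by blast
      then have "w = (block (x,t) @ u) @ [z, other z] @ v" "sh z ((block (x,t) @ u) @ [z]) > 0"
        using wr by auto
      then have "bad w" unfolding bad_def by blast
      then show False using less.prems(2) by simp
    qed
    moreover have "length rest < length w" using wr t1 by simp
    ultimately obtain d where "splitting rest d" using less.hyps by blast
    then have "splitting w ((x,t) # d)" using wr t1 by (simp add: splitting_def)
    then show ?thesis by blast
  qed
qed

lemma bad_not_collectable: "bad w \<Longrightarrow> \<not> collectable w"
proof
  assume "bad w" "collectable w"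
  then obtain u v x d where "w = u @ [x, other x] @ v" "sh x (u @ [x]) > 0" "splitting w d"
    unfolding bad_def collectable_def by blast
  then show False using good_split[of w d u x v] by simp
qed

lemma not_collectable_bad:
  "count_list w A = count_list w B \<Longrightarrow> \<not> collectable w \<Longrightarrow> bad w"
  using not_bad_collectable unfolding collectable_def by blast



lemma count0_rep: "count_list u x = 0 \<Longrightarrow> u = replicate (count_list u (other x)) (other x)"
proof (induction u)
  case Nil then show ?case by simp
next
  case (Cons z u)
  then have "z \<noteq> x" by (auto split: if_splits)
  then have "z = other x" by (rule neq_other)
  then show ?case using Cons by (auto split: if_splits)
qed

lemma comp3:
  assumes "\<forall>a\<in>set l. a \<ge> 1" "sum_list l = (3::nat)"
  shows "decc l 1 \<noteq> [2] \<or> decc l 2 \<noteq> [1,1] \<or> decc l 3 \<noteq> [2]"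
proof -
  have "l = [3] \<or> l = [2,1] \<or> l = [1,2] \<or> l = [1,1,1]"
  proof -
    obtain a l1 where l: "l = a # l1" using assms by (cases l) auto
    have a: "a \<ge> 1" "a \<le> 3" using assms l by auto
    show ?thesis
    proof (cases l1)
      case Nil then show ?thesis using assms l by auto
    next
      case (Cons b l2)
      have b: "b \<ge> 1" using assms l Cons by auto
      show ?thesis
      proof (cases l2)
        case Nil then show ?thesis using assms l Cons a b by (cases a; cases b) auto
      next
        case (Cons c l3)
        have c: "c \<ge> 1" using assms l \<open>l1 = b # l2\<close> Cons by auto
        have "l3 = []"
        proof (rule ccontr)
          assume "l3 \<noteq> []"
          then obtain e l4 where "l3 = e # l4" by (cases l3) auto
          then show False using assms l \<open>l1 = b # l2\<close> Cons by auto
        qed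
        then show ?thesis using assms l \<open>l1 = b # l2\<close> Cons a b c by auto
      qed
    qed
  qed
  then show ?thesis by (auto simp: numeral_2_eq_2 numeral_3_eq_3)
qed

lemma mismatch_sym: "mismatch P Q \<longleftrightarrow> mismatch Q P"
  unfolding mismatch_def by auto

lemma comp_del_pair:
  "splitting w d \<Longrightarrow> 1 \<le> j \<Longrightarrow> collectable (del_pair j w) \<and> composition (del_pair j w) = decc (map snd d) j"
  using splitting_del_pair composition_eq map_snd_decd collectable_def by metis



lemma caseB:
  assumes r3: "r \<ge> 3" and pP: "is_pattern r P" and pQ: "is_pattern r Q"
    and cP: "collectable P" and nQ: "\<not> collectable Q"
  shows "\<exists>j. 1 \<le> j \<and> j \<le> r \<and> mismatch (del_pair j P) (del_pair j Q)"
proof -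
  obtain d where sd: "splitting P d" using cP collectable_def by blast
  have cPj: "\<And>j. 1 \<le> j \<Longrightarrow> collectable (del_pair j P)"
    using comp_del_pair[OF sd] by blast
  have suff: "\<And>j. 1 \<le> j \<Longrightarrow> j \<le> r \<Longrightarrow> bad (del_pair j Q) \<Longrightarrow> ?thesis"
    using cPj bad_not_collectable mismatch_def by blast
  have balQ: "count_list Q A = count_list Q B" using pQ by (simp add: is_pattern_def)
  obtain u v x where Q: "Q = u @ [x, other x] @ v" and hpos: "sh x (u @ [x]) > 0"
    using not_collectable_bad[OF balQ nQ] unfolding bad_def by blast
  define cx where "cx = count_list u x"
  define co where "co = count_list u (other x)"
  have hco: "co \<ge> cx + 2" using hpos by (simp add: sh_def cx_def co_def)
  have rx: "count_list Q x = r" and ro: "count_list Q (other x) = r"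
    using pQ by (cases x; simp add: is_pattern_def)+
  have cvx: "cx + 1 + count_list v x = r" using rx Q by (simp add: cx_def)
  have cvo: "co + 1 + count_list v (other x) = r" using ro Q by (simp add: co_def)
  consider "cx \<ge> 1" | "cx = 0" "co \<ge> 3" | "cx = 0" "co = 2" "r \<ge> 4" | "cx = 0" "co = 2" "r = 3"
    using hco r3 by linarith
  then show ?thesis
  proof cases
    case 1
    define u1 where "u1 = del_occ (other x) 1 u"
    define u2 where "u2 = del_occ x 1 u1"
    have e1: "del_occ (other x) 1 Q = u1 @ [x, other x] @ v"
      using Q hco by (simp add: del_occ_append co_def u1_def)
    have cu1: "count_list u1 x = cx" "count_list u1 (other x) = co - 1"
      using hco by (simp_all add: u1_def count_del_occ cx_def co_def)
    have e2: "del_occ x 1 (u1 @ [x, other x] @ v) = u2 @ [x, other x] @ v"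
      using cu1 1 by (simp add: del_occ_append u2_def)
    have cu2: "count_list u2 x = cx - 1" "count_list u2 (other x) = co - 1"
      using cu1 1 by (simp_all add: u2_def count_del_occ)
    have "del_pair 1 Q = u2 @ [x, other x] @ v"
      using e1 e2 by (simp add: del_pair_dp[of _ _ x] dp_def)
    moreover have "sh x (u2 @ [x]) > 0" using cu2 hco 1 by (simp add: sh_def)
    ultimately have "bad (del_pair 1 Q)" unfolding bad_def by blast
    note b = this
    show ?thesis by (rule suff[OF _ _ b]) (use r3 in auto)
  next
    case 2
    define u1 where "u1 = del_occ (other x) 2 u"
    have e1: "del_occ (other x) 2 Q = u1 @ [x, other x] @ v"
      using Q 2 by (simp add: del_occ_append co_def u1_def)
    have cu1: "count_list u1 x = 0" "count_list u1 (other x) = co - 1"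
      using 2 by (simp_all add: u1_def count_del_occ cx_def co_def)
    have e2: "del_occ x 2 (u1 @ [x, other x] @ v) = u1 @ [x, other x] @ del_occ x 1 v"
      using cu1 by (simp add: del_occ_append)
    have "del_pair 2 Q = u1 @ [x, other x] @ del_occ x 1 v"
      using e1 e2 by (simp add: del_pair_dp[of _ _ x] dp_def)
    moreover have "sh x (u1 @ [x]) > 0" using cu1 2 by (simp add: sh_def)
    ultimately have "bad (del_pair 2 Q)" unfolding bad_def by blast
    note b = this
    show ?thesis by (rule suff[OF _ _ b]) (use r3 in auto)
  next
    case 3
    have e1: "del_occ (other x) r Q = u @ [x, other x] @ del_occ (other x) (r - 3) v"
    proof -
      have "del_occ (other x) r Q = u @ del_occ (other x) (r - 2) ([x, other x] @ v)"
        using Q 3 by (simp add: del_occ_append co_def)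
      moreover have "r - 2 - 1 = r - 3" by simp
      ultimately show ?thesis using 3 by simp
    qed
    have e2: "del_occ x r (u @ [x, other x] @ del_occ (other x) (r - 3) v) =
              u @ [x, other x] @ del_occ x (r - 1) (del_occ (other x) (r - 3) v)"
      using 3 by (simp add: del_occ_append cx_def)
    have "del_pair r Q = u @ [x, other x] @ del_occ x (r - 1) (del_occ (other x) (r - 3) v)"
      using e1 e2 by (simp add: del_pair_dp[of _ _ x] dp_def)
    then have "bad (del_pair r Q)" using hpos unfolding bad_def by blast
    note b = this
    show ?thesis by (rule suff[OF _ _ b]) (use r3 in auto)
  next
    case 4
    have u: "u = [other x, other x]" using count0_rep[of u x] 4
      by (simp add: cx_def co_def numeral_2_eq_2)
    have v: "v = [x, x]" using count0_rep[of v "other x"] 4 cvx cvo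
      by (simp add: numeral_2_eq_2)
    have hd: "hd Q = A" using pQ by (simp add: is_pattern_def)
    then have x: "x = B" using Q u by (cases x) auto
    have Q': "Q = [A,A,B,A,B,B]" using Q u v x by simp
    have q1: "del_pair 1 Q = [A,A,B,B]" using Q' by (simp add: del_pair_def)
    have q2: "del_pair 2 Q = [A,B,A,B]" using Q' by (simp add: del_pair_def)
    have q3: "del_pair 3 Q = [A,A,B,B]" using Q' by (simp add: del_pair_def)
    have s2: "splitting [A,A,B,B] [(A,2)]"
      by (simp add: splitting_def block_def numeral_2_eq_2)
    have s11: "splitting [A,B,A,B] [(A,1),(A,1)]"
      by (simp add: splitting_def block_def)
    have c2: "collectable [A,A,B,B]" "composition [A,A,B,B] = [2]"
      using s2 composition_eq collectable_def by auto
    have c11: "collectable [A,B,A,B]" "composition [A,B,A,B] = [1,1]"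
      using s11 composition_eq collectable_def by auto
    have pos: "\<forall>a\<in>set (map snd d). a \<ge> 1" using sd by (auto simp: splitting_def)
    have sum: "sum_list (map snd d) = 3"
      using sum_composition[OF sd, of A] pP 4 by (simp add: is_pattern_def)
    have cj: "\<And>j. 1 \<le> j \<Longrightarrow> collectable (del_pair j P) \<and> composition (del_pair j P) = decc (map snd d) j"
      using comp_del_pair[OF sd] by blast
    from comp3[OF pos sum] show ?thesis
    proof (elim disjE)
      assume "decc (map snd d) 1 \<noteq> [2]"
      then have "mismatch (del_pair 1 P) (del_pair 1 Q)"
        using cj[of 1] q1 c2 by (simp add: mismatch_def)
      then show ?thesis using r3 by (intro exI[of _ 1]) simp
    next
      assume "decc (map snd d) 2 \<noteq> [1,1]"
      then have "mismatch (del_pair 2 P) (del_pair 2 Q)"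
        using cj[of 2] q2 c11 by (simp add: mismatch_def)
      then show ?thesis using r3 by (intro exI[of _ 2]) simp
    next
      assume "decc (map snd d) 3 \<noteq> [2]"
      then have "mismatch (del_pair 3 P) (del_pair 3 Q)"
        using cj[of 3] q3 c2 by (simp add: mismatch_def)
      then show ?thesis using 4 by (intro exI[of _ 3]) simp
    qed
  qed
qed

theorem mainTheorem8:
  fixes r :: nat and P Q :: "letter list"
  assumes "r \<ge> 3" and "is_pattern r P" and "is_pattern r Q" and "mismatch P Q"
  shows "\<exists>j. 1 \<le> j \<and> j \<le> r \<and> mismatch (del_pair j P) (del_pair j Q)"
proof -
  consider "collectable P" "\<not> collectable Q" | "\<not> collectable P" "collectable Q"
    | "collectable P" "collectable Q" "composition P \<noteq> composition Q"
    using assms(4) unfolding mismatch_def by blast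
  then show ?thesis
  proof cases
    case 1 then show ?thesis using caseB[OF assms(1,2,3) 1] by simp
  next
    case 2
    then obtain j where "1 \<le> j" "j \<le> r" "mismatch (del_pair j Q) (del_pair j P)"
      using caseB[OF assms(1,3,2) 2(2,1)] by blast
    then show ?thesis using mismatch_sym[of "del_pair j Q" "del_pair j P"] by blast
  next
    case 3
    obtain d where sd: "splitting P d" using 3 collectable_def by blast
    obtain e where se: "splitting Q e" using 3 collectable_def by blast
    have pd: "\<forall>a\<in>set (map snd d). a \<ge> 1" using sd by (auto simp: splitting_def)
    have pe: "\<forall>a\<in>set (map snd e). a \<ge> 1" using se by (auto simp: splitting_def)
    have sdr: "sum_list (map snd d) = r" using sum_composition[OF sd, of A] assms(2)
      by (simp add: is_pattern_def)
    have ser: "sum_list (map snd e) = r" using sum_composition[OF se, of A] assms(3)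
      by (simp add: is_pattern_def)
    have ne: "map snd d \<noteq> map snd e" using 3 composition_eq sd se by metis
    have cj: "\<And>j. 1 \<le> j \<Longrightarrow> mismatch (del_pair j P) (del_pair j Q) \<longleftrightarrow>
                decc (map snd d) j \<noteq> decc (map snd e) j"
      using comp_del_pair[OF sd] comp_del_pair[OF se] by (simp add: mismatch_def)
    from decc_distinguish[OF pd pe sdr ser assms(1) ne] show ?thesis
    proof
      assume "decc (map snd d) 1 \<noteq> decc (map snd e) 1"
      then show ?thesis using cj[of 1] assms(1) by (intro exI[of _ 1]) simp
    next
      assume "decc (map snd d) r \<noteq> decc (map snd e) r"
      then show ?thesis using cj[of r] assms(1) by (intro exI[of _ r]) simp
    qed
  qed
qed


end
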